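(* Let $(X,d)$ be a metric space, $\mu$ a Borel probability measure on $X$, and $T:X\to X$ a measurable map preserving $\mu$. Let $B_1\supseteq B_2\supseteq\cdots$ be a decreasing sequence of measurable subsets of $X$ with $\lim_{n\to\infty}\mu(B_n)=0$. Then $$\liminf_{n\to\infty}\frac{\log\tau_{B_n}(x)}{-\log\mu(B_n)}\ge 1\quad\text{for }\mu\text{-a.e. }x\in X.$$
   Context: For a set $A\subseteq X$, the waiting (hitting) time is $\tau_A(x)=\min\{n\in\mathbf N: T^n(x)\in A\}$, with $\tau_A(x)=\infty$ if no such $n$ exists. *)

theory Defs
  imports "HOL-Probability.Probability"
begin

definition hitting_time :: "('a \<Rightarrow> 'a) \<Rightarrow> 'a set \<Rightarrow> 'a \<Rightarrow> enat" where
  "hitting_time T A x =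
     (if \<exists>n::nat. n \<ge> 1 \<and> (T ^^ n) x \<in> A
      then enat (LEAST n::nat. n \<ge> 1 \<and> (T ^^ n) x \<in> A) else \<infinity>)"

definition hitting_ratio :: "enat \<Rightarrow> real \<Rightarrow> ereal" where
  "hitting_ratio t m =
     (if t = \<infinity> then \<infinity> else ereal (ln (real (the_enat t))) / ereal (- ln m))"

definition measure_preserving_map :: "'a measure \<Rightarrow> ('a \<Rightarrow> 'a) \<Rightarrow> bool" where
  "measure_preserving_map M T \<longleftrightarrow> T \<in> measurable M M \<and> distr M M T = M"

end

theory Submission
  imports Defs
begin

lemma hit_le:
  "hitting_time T A x \<le> enat K \<longleftrightarrow> (\<exists>k. 1 \<le> k \<and> k \<le> K \<and> (T ^^ k) x \<in> A)"
proof
  assume h: "hitting_time T A x \<le> enat K"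
  then have ex: "\<exists>n::nat. n \<ge> 1 \<and> (T ^^ n) x \<in> A"
    unfolding hitting_time_def by (auto split: if_splits)
  let ?L = "LEAST n::nat. n \<ge> 1 \<and> (T ^^ n) x \<in> A"
  have "?L \<ge> 1 \<and> (T ^^ ?L) x \<in> A" using LeastI_ex[OF ex] .
  moreover have "?L \<le> K" using h ex unfolding hitting_time_def by auto
  ultimately show "\<exists>k. 1 \<le> k \<and> k \<le> K \<and> (T ^^ k) x \<in> A" by blast
next
  assume "\<exists>k. 1 \<le> k \<and> k \<le> K \<and> (T ^^ k) x \<in> A"
  then obtain k where k: "1 \<le> k" "k \<le> K" "(T ^^ k) x \<in> A" by blast
  then have "(LEAST n::nat. n \<ge> 1 \<and> (T ^^ n) x \<in> A) \<le> k" by (intro Least_le) auto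
  then show "hitting_time T A x \<le> enat K" using k unfolding hitting_time_def by auto
qed

lemma hit_inf:
  assumes "\<And>k. 1 \<le> k \<Longrightarrow> (T ^^ k) x \<notin> A"
  shows "hitting_time T A x = \<infinity>"
  using assms unfolding hitting_time_def by auto

lemma hit_mono:
  assumes "A \<subseteq> A'"
  shows "hitting_time T A' x \<le> hitting_time T A x"
proof (cases "hitting_time T A x")
  case (enat t)
  then have "hitting_time T A x \<le> enat t" by simp
  then obtain k where "1 \<le> k" "k \<le> t" "(T ^^ k) x \<in> A'" using hit_le[of T A x t] assms by blast
  then have "hitting_time T A' x \<le> enat t" using hit_le[of T A' x t] by blast
  then show ?thesis using enat by simp
next
  case infinity
  then show ?thesis by simp
qed

lemma preserve_pow:
  assumes "measure_preserving_map M T"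
  shows "(T ^^ k) \<in> measurable M M \<and> distr M M (T ^^ k) = M"
proof (induction k)
  case 0
  then show ?case by (simp add: distr_id2[of M] id_def)
next
  case (Suc k)
  have T: "T \<in> measurable M M" "distr M M T = M" using assms unfolding measure_preserving_map_def by auto
  have eq: "T ^^ Suc k = (T ^^ k) \<circ> T" by (rule funpow_Suc_right)
  have m: "(T ^^ Suc k) \<in> measurable M M" unfolding eq using Suc T by auto
  have "distr M M (T ^^ Suc k) = distr (distr M M T) M (T ^^ k)"
    unfolding eq using distr_distr[of "T ^^ k" M M T M] Suc T by simp
  also have "\<dots> = M" using T Suc by simp
  finally show ?case using m by (simp only:)
qed

lemma preserve_emeasure:
  assumes "measure_preserving_map M T" "A \<in> sets M"
  shows "emeasure M ((T ^^ k) -` A \<inter> space M) = emeasure M A"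
    and "(T ^^ k) -` A \<inter> space M \<in> sets M"
proof -
  have p: "(T ^^ k) \<in> measurable M M" "distr M M (T ^^ k) = M" using preserve_pow[OF assms(1)] by auto
  show "emeasure M ((T ^^ k) -` A \<inter> space M) = emeasure M A"
    using emeasure_distr[OF p(1) assms(2)] p(2) by simp
  show "(T ^^ k) -` A \<inter> space M \<in> sets M" using p(1) assms(2) by (rule measurable_sets)
qed

lemma hit_measure:
  assumes "prob_space M" "measure_preserving_map M T" "A \<in> sets M"
  shows "{x\<in>space M. hitting_time T A x \<le> enat K} \<in> sets M"
    and "measure M {x\<in>space M. hitting_time T A x \<le> enat K} \<le> real K * measure M A"
proof -
  interpret prob_space M by fact
  have eq: "{x\<in>space M. hitting_time T A x \<le> enat K} = (\<Union>k\<in>{1..K}. (T ^^ k) -` A \<inter> space M)"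
    by (auto simp: hit_le)
  have s: "\<And>k. (T ^^ k) -` A \<inter> space M \<in> sets M" using preserve_emeasure(2)[OF assms(2,3)] .
  show "{x\<in>space M. hitting_time T A x \<le> enat K} \<in> sets M" unfolding eq by (rule sets.finite_UN) (use s in auto)
  have "measure M (\<Union>k\<in>{1..K}. (T ^^ k) -` A \<inter> space M) \<le> (\<Sum>k\<in>{1..K}. measure M ((T ^^ k) -` A \<inter> space M))"
    by (rule measure_subadditive_finite) (use s in auto)
  also have "\<dots> = (\<Sum>k\<in>{1..K}. measure M A)"
    using preserve_emeasure(1)[OF assms(2,3)] by (simp add: measure_def)
  finally show "measure M {x\<in>space M. hitting_time T A x \<le> enat K} \<le> real K * measure M A"
    unfolding eq by simp
qed

lemma pointwise:
  fixes p :: "nat \<Rightarrow> real" and m :: "nat \<Rightarrow> nat"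
  assumes p0: "\<And>n. 0 \<le> p n" and plim: "p \<longlonglongrightarrow> 0" and dec: "decseq B"
    and zero: "\<And>n k. p n = 0 \<Longrightarrow> 1 \<le> k \<Longrightarrow> (T^^k) x \<notin> B n"
    and ev: "\<And>i. eventually (\<lambda>j. \<forall>n. 0 < p n \<and> nat \<lfloor>- ln (p n)\<rfloor> = j \<longrightarrow>
        \<not> hitting_time T (B (m j)) x \<le> enat (nat \<lfloor>exp (real j * (1 - 1 / real (Suc i)))\<rfloor>)) sequentially"
    and mle: "\<And>n. 0 < p n \<Longrightarrow> m (nat \<lfloor>- ln (p n)\<rfloor>) \<le> n"
  shows "1 \<le> liminf (\<lambda>n. hitting_ratio (hitting_time T (B n) x) (p n))"
  unfolding le_Liminf_iff
proof (intro allI impI)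
  fix y :: ereal assume "y < 1"
  then obtain r where yr: "y < ereal r" and r1: "r < 1" using ereal_dense2 by force
  have yinf: "y \<noteq> \<infinity>" using yr by (cases y) auto
  obtain i where i: "1 / real (Suc i) < (1 - r) / 2"
    using r1 by (metis diff_gt_0_iff_gt half_gt_zero nat_approx_posE)
  define e where "e = 1 / real (Suc i)"
  have e0: "0 < e" "e \<le> 1" unfolding e_def by auto
  have "e < (1 - r) / 2" using i unfolding e_def .
  then have re: "r < 1 - 2 * e" by (simp add: field_simps)
  obtain J0 where J0: "\<And>j. j \<ge> J0 \<Longrightarrow> \<forall>n. 0 < p n \<and> nat \<lfloor>- ln (p n)\<rfloor> = j \<longrightarrow>
        \<not> hitting_time T (B (m j)) x \<le> enat (nat \<lfloor>exp (real j * (1 - e))\<rfloor>)"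
    using ev[of i] unfolding eventually_sequentially e_def by blast
  define J where "J = max J0 (Suc i)"
  have "eventually (\<lambda>n. p n < exp (- real J)) sequentially"
    using order_tendstoD(2)[OF plim, of "exp (- real J)"] by simp
  then show "eventually (\<lambda>n. y < hitting_ratio (hitting_time T (B n) x) (p n)) sequentially"
  proof (rule eventually_mono)
    fix n assume pn: "p n < exp (- real J)"
    show "y < hitting_ratio (hitting_time T (B n) x) (p n)"
    proof (cases "p n = 0")
      case True
      then have "hitting_time T (B n) x = \<infinity>" using zero by (intro hit_inf) auto
      then show ?thesis using yinf by (simp add: hitting_ratio_def)
    next
      case False
      then have ppos: "0 < p n" using p0[of n] by simp
      define D where "D = - ln (p n)"
      define j where "j = nat \<lfloor>D\<rfloor>"
      have "ln (p n) < ln (exp (- real J))" using pn ppos by (subst ln_less_cancel_iff) auto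
      then have "real J < D" unfolding D_def by simp
      then have jJ: "J \<le> j" unfolding j_def by linarith
      have Dj: "real j \<le> D" "D < real j + 1" unfolding j_def using \<open>real J < D\<close> by linarith+
      have j1: "Suc i \<le> j" using jJ unfolding J_def by simp
      have je: "1 \<le> real j * e" using j1 unfolding e_def by (simp add: field_simps)
      have mj: "m j \<le> n" using mle[OF ppos] unfolding j_def D_def .
      have sub: "B n \<subseteq> B (m j)" using decseqD[OF dec mj] .
      define K where "K = nat \<lfloor>exp (real j * (1 - e))\<rfloor>"
      have nle: "\<not> hitting_time T (B (m j)) x \<le> enat K"
        using J0[of j] jJ ppos unfolding J_def K_def j_def D_def by auto
      have hge: "hitting_time T (B (m j)) x \<le> hitting_time T (B n) x" using hit_mono[OF sub] .
      show ?thesis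
      proof (cases "hitting_time T (B n) x")
        case infinity
        then show ?thesis using yinf by (simp add: hitting_ratio_def)
      next
        case (enat t)
        have "enat K < hitting_time T (B (m j)) x" using nle by (simp add: not_le)
        then have "enat K < hitting_time T (B n) x" using hge by (rule order.strict_trans2)
        then have "enat K < enat t" using enat by simp
        then have tK: "K + 1 \<le> t" by simp
        have "exp (real j * (1 - e)) < real K + 1"
        proof -
          define z where "z = exp (real j * (1 - e))"
          have "0 \<le> \<lfloor>z\<rfloor>" unfolding z_def by simp
          then have "real K = real_of_int \<lfloor>z\<rfloor>" unfolding K_def z_def[symmetric] by simp
          moreover have "z < real_of_int \<lfloor>z\<rfloor> + 1" by (rule real_of_int_floor_add_one_gt)
          ultimately show ?thesis unfolding z_def by linarith
        qed
        also have "\<dots> \<le> real t" using tK by linarith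
        finally have et: "exp (real j * (1 - e)) < real t" .
        have tpos: "0 < real t" using et by (meson exp_gt_zero order.strict_trans)
        have "ln (exp (real j * (1 - e))) < ln (real t)" using et tpos by (subst ln_less_cancel_iff) auto
        then have lt: "real j * (1 - e) < ln (real t)" by simp
        have "real (Suc i) \<le> real j" using j1 by (rule of_nat_mono)
        then have D0: "0 < D" using Dj by simp
        have lt0: "0 \<le> real j * (1 - e)" using e0 by simp
        have "real j * (1 - e) / (real j + 1) \<le> ln (real t) / D"
        proof -
          have "real j * (1 - e) / (real j + 1) \<le> ln (real t) / (real j + 1)"
            using lt by (simp add: divide_right_mono)
          also have "\<dots> \<le> ln (real t) / D"
            using lt lt0 D0 Dj by (intro divide_left_mono) auto
          finally show ?thesis .
        qed
        moreover have "1 - 2 * e \<le> real j * (1 - e) / (real j + 1)"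
          using je e0 by (simp add: field_simps)
        ultimately have "r < ln (real t) / D" using re by linarith
        then have "ereal r < ereal (ln (real t) / D)" by simp
        then have "y < ereal (ln (real t) / D)" using yr by (rule less_trans[rotated])
        then show ?thesis using D0 enat
          by (simp add: hitting_ratio_def D_def[symmetric])
      qed
    qed
  qed
qed


theorem proposition2p1:
  fixes M :: "'a::metric_space measure"
    and T :: "'a \<Rightarrow> 'a"
    and B :: "nat \<Rightarrow> 'a set"
  assumes "prob_space M"
    and "sets M = sets borel"
    and "measure_preserving_map M T"
    and "\<And>n. B n \<in> sets M"
    and "decseq B"
    and "(\<lambda>n. measure M (B n)) \<longlonglongrightarrow> 0"
  shows "AE x in M. liminf (\<lambda>n. hitting_ratio (hitting_time T (B n) x) (measure M (B n))) \<ge> 1"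
proof -
  interpret prob_space M by fact
  define p where "p n = measure M (B n)" for n
  define m where "m j = (LEAST n. 0 < p n \<and> nat \<lfloor>- ln (p n)\<rfloor> = j)" for j
  define E where "E i j = (if (\<exists>n. 0 < p n \<and> nat \<lfloor>- ln (p n)\<rfloor> = j)
     then {x\<in>space M. hitting_time T (B (m j)) x \<le> enat (nat \<lfloor>exp (real j * (1 - 1 / real (Suc i)))\<rfloor>)}
     else {})" for i j
  have Esets: "E i j \<in> sets M" for i j
    unfolding E_def using hit_measure(1)[OF assms(1,3) assms(4)] by auto
  have Emeas: "measure M (E i j) \<le> exp (- (1 / real (Suc i))) ^ j" for i j
  proof (cases "\<exists>n. 0 < p n \<and> nat \<lfloor>- ln (p n)\<rfloor> = j")
    case False
    then have "E i j = {}" unfolding E_def by meson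
    then show ?thesis by simp
  next
    case True
    define e where "e = 1 / real (Suc i)"
    have mj: "0 < p (m j) \<and> nat \<lfloor>- ln (p (m j))\<rfloor> = j"
      unfolding m_def using LeastI_ex[OF True] .
    have "p (m j) \<le> 1" unfolding p_def by simp
    then have "0 \<le> - ln (p (m j))" using mj by simp
    then have "real j \<le> - ln (p (m j))" using mj by linarith
    then have "ln (p (m j)) \<le> - real j" by simp
    then have pm: "p (m j) \<le> exp (- real j)" using mj
      by (metis exp_le_cancel_iff exp_ln)
    define K where "K = nat \<lfloor>exp (real j * (1 - e))\<rfloor>"
    have K: "real K \<le> exp (real j * (1 - e))"
    proof -
      have "0 \<le> \<lfloor>exp (real j * (1 - e))\<rfloor>" by simp
      then show ?thesis unfolding K_def by simp
    qed
    have Eeq: "E i j = {x\<in>space M. hitting_time T (B (m j)) x \<le> enat K}"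
      unfolding E_def K_def e_def by (rule if_P[OF True])
    have "measure M (E i j) \<le> real K * p (m j)"
      unfolding Eeq p_def by (rule hit_measure(2)[OF assms(1,3) assms(4)])
    also have "\<dots> \<le> exp (real j * (1 - e)) * exp (- real j)"
      using K pm mj by (intro mult_mono) auto
    also have "\<dots> = exp (real j * (- e))" by (simp add: exp_add[symmetric] algebra_simps)
    also have "\<dots> = exp (- e) ^ j" by (rule exp_of_nat_mult)
    finally show ?thesis unfolding e_def .
  qed
  have BC: "AE x in M. eventually (\<lambda>j. x \<in> space M - E i j) sequentially" for i
  proof (rule borel_cantelli_AE1)
    show "E i j \<in> sets M" for j by (rule Esets)
    show "emeasure M (E i j) < \<infinity>" for j by (simp add: less_top[symmetric])
    have "summable (\<lambda>j. exp (- (1 / real (Suc i))) ^ j)"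
      by (rule summable_geometric) simp
    then show "summable (\<lambda>j. measure M (E i j))"
      by (rule summable_comparison_test'[where N=0]) (use Emeas in simp)
  qed
  have zero: "AE x in M. \<forall>n k. p n = 0 \<longrightarrow> 1 \<le> k \<longrightarrow> (T^^k) x \<notin> B n"
    unfolding AE_all_countable
  proof (intro allI)
    fix n k
    show "AE x in M. p n = 0 \<longrightarrow> 1 \<le> k \<longrightarrow> (T^^k) x \<notin> B n"
    proof (cases "p n = 0")
      case True
      have "emeasure M (B n) = 0" using True unfolding p_def by (simp add: emeasure_eq_measure)
      then have "(T ^^ k) -` B n \<inter> space M \<in> null_sets M"
        using preserve_emeasure[OF assms(3) assms(4)] by auto
      then show ?thesis by (rule AE_I') auto
    next
      case False
      then show ?thesis by simp
    qed
  qed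
  have BC': "AE x in M. \<forall>i. eventually (\<lambda>j. x \<in> space M - E i j) sequentially"
    unfolding AE_all_countable using BC by blast
  show ?thesis
    using BC' zero
  proof eventually_elim
    case (elim x)
    have "1 \<le> liminf (\<lambda>n. hitting_ratio (hitting_time T (B n) x) (p n))"
    proof (rule pointwise[where m=m])
      show "0 \<le> p n" for n unfolding p_def by simp
      show "p \<longlonglongrightarrow> 0" unfolding p_def using assms(6) .
      show "decseq B" by fact
      show "\<And>n k. p n = 0 \<Longrightarrow> 1 \<le> k \<Longrightarrow> (T^^k) x \<notin> B n" using elim(2) by blast
      show "0 < p n \<Longrightarrow> m (nat \<lfloor>- ln (p n)\<rfloor>) \<le> n" for n
        unfolding m_def by (rule Least_le) simp
      fix i
      show "eventually (\<lambda>j. \<forall>n. 0 < p n \<and> nat \<lfloor>- ln (p n)\<rfloor> = j \<longrightarrow>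
        \<not> hitting_time T (B (m j)) x \<le> enat (nat \<lfloor>exp (real j * (1 - 1 / real (Suc i)))\<rfloor>)) sequentially"
        using elim(1)[rule_format, of i]
      proof (rule eventually_mono)
        fix j assume xE: "x \<in> space M - E i j"
        show "\<forall>n. 0 < p n \<and> nat \<lfloor>- ln (p n)\<rfloor> = j \<longrightarrow>
          \<not> hitting_time T (B (m j)) x \<le> enat (nat \<lfloor>exp (real j * (1 - 1 / real (Suc i)))\<rfloor>)"
        proof (intro allI impI)
          fix n assume n: "0 < p n \<and> nat \<lfloor>- ln (p n)\<rfloor> = j"
          then have "\<exists>n. 0 < p n \<and> nat \<lfloor>- ln (p n)\<rfloor> = j" by blast
          then have "E i j = {x\<in>space M. hitting_time T (B (m j)) x \<le> enat (nat \<lfloor>exp (real j * (1 - 1 / real (Suc i)))\<rfloor>)}"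
            unfolding E_def by (rule if_P)
          then show "\<not> hitting_time T (B (m j)) x \<le> enat (nat \<lfloor>exp (real j * (1 - 1 / real (Suc i)))\<rfloor>)"
            using xE by blast
        qed
      qed
    qed
    then show ?case unfolding p_def .
  qed
qed

end
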